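(* There exists a one-input one-output AND-OR net that does not belong to $\mathbf S(\mathbf{11tAND}\cup\mathbf{11pOR})$.
   Context: Petri nets: $(P,T,F)$ with finite disjoint places $P$, transitions $T$, flow edges $F\subseteq(P\times T)\cup(T\times P)$; $\bullet x=\{y\mid(y,x)\in F\}$, $x\bullet=\{y\mid(x,y)\in F\}$. Workflow nets. A pWF net is $(P,T,F,I,O)$ with $(P,T,F)$ a Petri net, $I,O\subseteq P$ non-empty, every node reachable by a directed path from some node of $I$, and some node of $O$ reachable from every node. A tWF net is the same with $I,O$ non-empty subsets of $T$. Input nodes may have incoming edges and output nodes outgoing edges. A WF net is a pWF or tWF net; it is one-input (one-output) if $|I|=1$ ($|O|=1$). Substitution. Let $N=(P,T,F,I,O)$ and $M=(P',T',F',I',O')$ be WF nets with disjoint node sets. If $p\in P$ and $M$ is a pWF net, $N\otimes_p M$ is obtained from $N$ by deleting $p$ and all edges incident to $p$, adding all nodes and edges of $M$, adding an edge $(t,p')$ for each $t\in\bullet_N p$ and each $p'\in I'$, and an edge $(p',t)$ for each $p'\in O'$ and each $t\in p\bullet_N$; its input set is $(I\setminus\{p\})\cup I'$ if $p\in I$ and $I$ otherwise, and its output set is $(O\setminus\{p\})\cup O'$ if $p\in O$ and $O$ otherwise. If $t\in T$ and $M$ is a tWF net, $N\otimes_t M$ is defined analogously: delete $t$ and its edges, add $M$, add $(q,t')$ for each $q\in\bullet_N t$, $t'\in I'$, and $(t',q)$ for each $t'\in O'$, $q\in t\bullet_N$, with input/output sets updated in the same way. The substitution closure $\mathbf S(C)$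 of a class $C$ of WF nets is the smallest superclass of $C$ such that whenever $N,M\in\mathbf S(C)$ are disjoint, $N\otimes_p M\in\mathbf S(C)$ for every place $p$ of $N$ if $M$ is a pWF net, and $N\otimes_t M\in\mathbf S(C)$ for every transition $t$ of $N$ if $M$ is a tWF net. AND and OR nets. An AND net is an acyclic WF net $(P,T,F,I,O)$ such that for every place $p$: (1) either $p\in I$ and $|\bullet p|=0$, or $p\notin I$ and $|\bullet p|=1$; and (2) either $p\in O$ and $|p\bullet|=0$, or $p\notin O$ and $|p\bullet|=1$. An OR net is a (possibly cyclic) WF net such that for every transition $t$: (1) either $t\in I$ and $|\bullet t|=0$, or $t\notin I$ and $|\bullet t|=1$; and (2) either $t\in O$ and $|t\bullet|=0$, or $t\notin O$ and $|t\bullet|=1$. A pAND (tAND, pOR, tOR) net is an AND (AND, OR, OR) net that is a pWF (tWF, pWF, tWF) net. $\mathbf{pAND}$ is the class of pAND nets, $\mathbf{11tAND}$ the class of one-input one-output tAND nets, $\mathbf{11pOR}$ the class of one-input one-output pOR nets, and $\mathbf{tOR}$ the class of tOR nets. The class of AND-OR nets is $\mathbf S(\mathbf{pAND}\cup\mathbf{11tAND}\cup\mathbf{11pOR}\cup\mathbf{tOR})$. *)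

theory Defs
  imports Main
begin

record 'n wfnet =
  pl   :: "'n set"
  tr   :: "'n set"
  fl   :: "('n \<times> 'n) set"
  inp  :: "'n set"
  outp :: "'n set"

definition nodes :: "'n wfnet \<Rightarrow> 'n set" where
  "nodes N = pl N \<union> tr N"

definition pre :: "'n wfnet \<Rightarrow> 'n \<Rightarrow> 'n set" where
  "pre N x = {y. (y, x) \<in> fl N}"

definition post :: "'n wfnet \<Rightarrow> 'n \<Rightarrow> 'n set" where
  "post N x = {y. (x, y) \<in> fl N}"

definition petri_net :: "'n wfnet \<Rightarrow> bool" where
  "petri_net N \<longleftrightarrow> finite (pl N) \<and> finite (tr N) \<and> pl N \<inter> tr N = {} \<and>
     fl N \<subseteq> (pl N \<times> tr N) \<union> (tr N \<times> pl N)"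

definition wf_conn :: "'n wfnet \<Rightarrow> bool" where
  "wf_conn N \<longleftrightarrow> (\<forall>x \<in> nodes N. \<exists>i \<in> inp N. (i, x) \<in> (fl N)\<^sup>*) \<and>
                  (\<forall>x \<in> nodes N. \<exists>q \<in> outp N. (x, q) \<in> (fl N)\<^sup>*)"

definition pWF :: "'n wfnet \<Rightarrow> bool" where
  "pWF N \<longleftrightarrow> petri_net N \<and> inp N \<subseteq> pl N \<and> outp N \<subseteq> pl N \<and>
     inp N \<noteq> {} \<and> outp N \<noteq> {} \<and> wf_conn N"

definition tWF :: "'n wfnet \<Rightarrow> bool" where
  "tWF N \<longleftrightarrow> petri_net N \<and> inp N \<subseteq> tr N \<and> outp N \<subseteq> tr N \<and>
     inp N \<noteq> {} \<and> outp N \<noteq> {} \<and> wf_conn N"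

definition WF :: "'n wfnet \<Rightarrow> bool" where
  "WF N \<longleftrightarrow> pWF N \<or> tWF N"

text \<open>Substitution of node x of N by net M (x a place and M a pWF net, or x a transition
  and M a tWF net). Since x is removed from both node sets, one definition covers both cases.\<close>
definition subst :: "'n wfnet \<Rightarrow> 'n \<Rightarrow> 'n wfnet \<Rightarrow> 'n wfnet" where
  "subst N x M = \<lparr>
     pl = (pl N - {x}) \<union> pl M,
     tr = (tr N - {x}) \<union> tr M,
     fl = {e \<in> fl N. fst e \<noteq> x \<and> snd e \<noteq> x} \<union> fl M
          \<union> {(y, z). y \<in> pre N x \<and> z \<in> inp M}
          \<union> {(z, y). z \<in> outp M \<and> y \<in> post N x},
     inp = (if x \<in> inp N then (inp N - {x}) \<union> inp M else inp N),
     outp = (if x \<in> outp N then (outp N - {x}) \<union> outp M else outp N) \<rparr>"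

inductive_set Scl :: "'n wfnet set \<Rightarrow> 'n wfnet set" for C :: "'n wfnet set" where
  base: "N \<in> C \<Longrightarrow> N \<in> Scl C"
| place: "\<lbrakk>N \<in> Scl C; M \<in> Scl C; nodes N \<inter> nodes M = {}; p \<in> pl N; pWF M\<rbrakk>
           \<Longrightarrow> subst N p M \<in> Scl C"
| trans: "\<lbrakk>N \<in> Scl C; M \<in> Scl C; nodes N \<inter> nodes M = {}; t \<in> tr N; tWF M\<rbrakk>
           \<Longrightarrow> subst N t M \<in> Scl C"

definition AND_net :: "'n wfnet \<Rightarrow> bool" where
  "AND_net N \<longleftrightarrow> WF N \<and> acyclic (fl N) \<and>
     (\<forall>p \<in> pl N. ((p \<in> inp N \<and> card (pre N p) = 0) \<or> (p \<notin> inp N \<and> card (pre N p) = 1)) \<and>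
                 ((p \<in> outp N \<and> card (post N p) = 0) \<or> (p \<notin> outp N \<and> card (post N p) = 1)))"

definition OR_net :: "'n wfnet \<Rightarrow> bool" where
  "OR_net N \<longleftrightarrow> WF N \<and>
     (\<forall>t \<in> tr N. ((t \<in> inp N \<and> card (pre N t) = 0) \<or> (t \<notin> inp N \<and> card (pre N t) = 1)) \<and>
                 ((t \<in> outp N \<and> card (post N t) = 0) \<or> (t \<notin> outp N \<and> card (post N t) = 1)))"

definition pAND :: "'n wfnet set" where
  "pAND = {N. AND_net N \<and> pWF N}"

definition tAND11 :: "'n wfnet set" where
  "tAND11 = {N. AND_net N \<and> tWF N \<and> card (inp N) = 1 \<and> card (outp N) = 1}"

definition pOR11 :: "'n wfnet set" where
  "pOR11 = {N. OR_net N \<and> pWF N \<and> card (inp N) = 1 \<and> card (outp N) = 1}"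

definition tOR :: "'n wfnet set" where
  "tOR = {N. OR_net N \<and> tWF N}"

definition AND_OR_nets :: "'n wfnet set" where
  "AND_OR_nets = Scl (pAND \<union> tAND11 \<union> pOR11 \<union> tOR)"

end

theory Submission imports Defs begin

lemma petri_fl: "petri_net N \<Longrightarrow> (a,b) \<in> fl N \<Longrightarrow> a \<in> nodes N \<and> b \<in> nodes N \<and> a \<noteq> b"
  by (auto simp: petri_net_def nodes_def)

definition Inv :: "'n wfnet \<Rightarrow> bool" where
"Inv N \<longleftrightarrow> petri_net N \<and>
  (\<exists>i e. inp N = {i} \<and> outp N = {e} \<and> i \<in> nodes N \<and> e \<in> nodes N \<and>
      (\<forall>y\<in>nodes N. (i,y) \<in> (fl N)\<^sup>*) \<and> (i,e) \<in> (fl N)\<^sup>*) \<and>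
  (\<forall>e\<in>outp N \<inter> tr N. post N e = {}) \<and>
  (\<forall>i\<in>inp N \<inter> tr N. pre N i = {}) \<and>
  (\<forall>i\<in>inp N. \<forall>t\<in>pre N i. post N t = {i}) \<and>
  (\<forall>t\<in>tr N. \<forall>q\<in>post N t. \<forall>s\<in>pre N q. 2 \<le> card (post N t) \<longrightarrow> s = t \<or> (q,s) \<in> (fl N)\<^sup>*)"

lemma bip: "petri_net K \<Longrightarrow> (a,b) \<in> fl K \<Longrightarrow> (a \<in> pl K \<and> b \<in> tr K \<and> a \<notin> tr K \<and> b \<notin> pl K) \<or> (a \<in> tr K \<and> b \<in> pl K \<and> a \<notin> pl K \<and> b \<notin> tr K)"
  unfolding petri_net_def by blast

locale sub =
  fixes N M :: "'n wfnet" and x i e :: 'n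
  assumes InvN: "Inv N" and InvM: "Inv M"
  and disj: "nodes N \<inter> nodes M = {}"
  and kind: "(x \<in> pl N \<and> i \<in> pl M \<and> e \<in> pl M) \<or> (x \<in> tr N \<and> i \<in> tr M \<and> e \<in> tr M)"
  and inpM: "inp M = {i}" and outM: "outp M = {e}"
begin

abbreviation W where "W \<equiv> subst N x M"

lemma pN: "petri_net N" using InvN by (simp add: Inv_def)
lemma pM: "petri_net M" using InvM by (simp add: Inv_def)

lemma io: "(i,e) \<in> (fl M)\<^sup>*" using InvM inpM outM by (auto simp: Inv_def)
lemma reachM: "y \<in> nodes M \<Longrightarrow> (i,y) \<in> (fl M)\<^sup>*" using InvM inpM by (auto simp: Inv_def)

lemma xN: "x \<in> nodes N" using kind by (auto simp: nodes_def)
lemma ioM: "i \<in> nodes M" "e \<in> nodes M" using kind by (auto simp: nodes_def)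
lemma xnM: "x \<notin> nodes M" using xN disj by auto
lemma ionN: "i \<notin> nodes N" "e \<notin> nodes N" using ioM disj by auto

lemma fl_W: "(a,b) \<in> fl W \<longleftrightarrow> ((a,b) \<in> fl N \<and> a \<noteq> x \<and> b \<noteq> x) \<or> (a,b) \<in> fl M \<or> ((a,x) \<in> fl N \<and> b = i) \<or> (a = e \<and> (x,b) \<in> fl N)"
  by (auto simp: subst_def pre_def post_def inpM outM)

lemma flM_W: "fl M \<subseteq> fl W" using fl_W by auto
lemma rtM_W: "(a,b) \<in> (fl M)\<^sup>* \<Longrightarrow> (a,b) \<in> (fl W)\<^sup>*"
  using rtrancl_mono[OF flM_W] by auto

lemma nodes_W: "nodes W = (nodes N - {x}) \<union> nodes M"
  using xnM by (auto simp: subst_def nodes_def)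

lemma post_WN: "y \<in> nodes N \<Longrightarrow> y \<noteq> x \<Longrightarrow> post W y = (\<lambda>z. if z = x then i else z) ` post N y"
proof -
  assume y: "y \<in> nodes N" "y \<noteq> x"
  have nM: "(y,b) \<notin> fl M" for b using petri_fl[OF pM, of y b] y disj by auto
  have ye: "y \<noteq> e" using y ionN by auto
  show ?thesis
  proof (rule set_eqI, rule iffI)
    fix z assume "z \<in> post W y"
    then have "(y,z) \<in> fl W" by (simp add: post_def)
    then have "((y,z) \<in> fl N \<and> z \<noteq> x) \<or> ((y,x) \<in> fl N \<and> z = i)"
      using nM ye y(2) unfolding fl_W by blast
    then show "z \<in> (\<lambda>z. if z = x then i else z) ` post N y"
    proof
      assume h: "(y,z) \<in> fl N \<and> z \<noteq> x"
      then show ?thesis by (intro image_eqI[where x=z]) (auto simp: post_def)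
    next
      assume h: "(y,x) \<in> fl N \<and> z = i"
      then show ?thesis by (intro image_eqI[where x=x]) (auto simp: post_def)
    qed
  next
    fix z assume "z \<in> (\<lambda>z. if z = x then i else z) ` post N y"
    then obtain w where w: "(y,w) \<in> fl N" "z = (if w = x then i else w)" by (auto simp: post_def)
    then have "(y,z) \<in> fl W" using y(2) unfolding fl_W by (cases "w = x") auto
    then show "z \<in> post W y" by (simp add: post_def)
  qed
qed

lemma pre_WN: "y \<in> nodes N \<Longrightarrow> y \<noteq> x \<Longrightarrow> pre W y = (\<lambda>z. if z = x then e else z) ` pre N y"
proof -
  assume y: "y \<in> nodes N" "y \<noteq> x"
  have nM: "(b,y) \<notin> fl M" for b using petri_fl[OF pM, of b y] y disj by auto
  have yi: "y \<noteq> i" using y ionN by auto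
  show ?thesis
  proof (rule set_eqI, rule iffI)
    fix z assume "z \<in> pre W y"
    then have "(z,y) \<in> fl W" by (simp add: pre_def)
    then have "((z,y) \<in> fl N \<and> z \<noteq> x) \<or> ((x,y) \<in> fl N \<and> z = e)"
      using nM yi y(2) unfolding fl_W by blast
    then show "z \<in> (\<lambda>z. if z = x then e else z) ` pre N y"
    proof
      assume h: "(z,y) \<in> fl N \<and> z \<noteq> x"
      then show ?thesis by (intro image_eqI[where x=z]) (auto simp: pre_def)
    next
      assume h: "(x,y) \<in> fl N \<and> z = e"
      then show ?thesis by (intro image_eqI[where x=x]) (auto simp: pre_def)
    qed
  next
    fix z assume "z \<in> (\<lambda>z. if z = x then e else z) ` pre N y"
    then obtain w where w: "(w,y) \<in> fl N" "z = (if w = x then e else w)" by (auto simp: pre_def)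
    then have "(z,y) \<in> fl W" using y(2) unfolding fl_W by (cases "w = x") auto
    then show "z \<in> pre W y" by (simp add: pre_def)
  qed
qed

lemma post_WM: "y \<in> nodes M \<Longrightarrow> post W y = post M y \<union> (if y = e then post N x else {})"
proof -
  assume y: "y \<in> nodes M"
  have nN: "(y,b) \<notin> fl N" for b using petri_fl[OF pN, of y b] y disj by auto
  have yx: "y \<noteq> x" using y xnM by auto
  show ?thesis
  proof (rule set_eqI)
    fix z
    have "(y,z) \<in> fl W \<longleftrightarrow> (y,z) \<in> fl M \<or> (y = e \<and> (x,z) \<in> fl N)"
      unfolding fl_W using nN by blast
    then show "z \<in> post W y \<longleftrightarrow> z \<in> post M y \<union> (if y = e then post N x else {})"
      by (simp add: post_def)
  qed
qed

lemma pre_WM: "y \<in> nodes M \<Longrightarrow> pre W y = pre M y \<union> (if y = i then pre N x else {})"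
proof -
  assume y: "y \<in> nodes M"
  have nN: "(b,y) \<notin> fl N" for b using petri_fl[OF pN, of b y] y disj by auto
  show ?thesis
  proof (rule set_eqI)
    fix z
    have "(z,y) \<in> fl W \<longleftrightarrow> (z,y) \<in> fl M \<or> (y = i \<and> (z,x) \<in> fl N)"
      unfolding fl_W using nN by blast
    then show "z \<in> pre W y \<longleftrightarrow> z \<in> pre M y \<union> (if y = i then pre N x else {})"
      by (simp add: pre_def)
  qed
qed

lemma lift: "(u,v) \<in> (fl N)\<^sup>* \<Longrightarrow> ((if u = x then i else u), (if v = x then i else v)) \<in> (fl W)\<^sup>*"
proof (induction rule: rtrancl_induct)
  case base then show ?case by simp
next
  case (step v w)
  have vw: "v \<noteq> w" using petri_fl[OF pN step(2)] by auto
  show ?case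
  proof (cases "v = x")
    case True
    then have wx: "w \<noteq> x" using vw by auto
    have ie: "(i,e) \<in> (fl W)\<^sup>*" using rtM_W[OF io] .
    have ew: "(e,w) \<in> fl W" using True step(2) by (simp add: fl_W)
    have "((if u = x then i else u), i) \<in> (fl W)\<^sup>*" using step(3) True by simp
    also have "(i,e) \<in> (fl W)\<^sup>*" by (rule ie)
    also have "(e,w) \<in> (fl W)\<^sup>*" using ew by blast
    finally show ?thesis using wx by simp
  next
    case False
    then have "((if v = x then i else v), (if w = x then i else w)) \<in> fl W"
      using step(2) by (auto simp: fl_W)
    then show ?thesis using step(3) by (meson rtrancl_into_rtrancl)
  qed
qed

lemma liftN: "(u,v) \<in> (fl N)\<^sup>* \<Longrightarrow> u \<noteq> x \<Longrightarrow> v \<noteq> x \<Longrightarrow> (u,v) \<in> (fl W)\<^sup>*"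
  using lift[of u v] by simp
lemma liftNx: "(u,x) \<in> (fl N)\<^sup>* \<Longrightarrow> u \<noteq> x \<Longrightarrow> (u,e) \<in> (fl W)\<^sup>*"
  using lift[of u x] rtM_W[OF io] by simp
lemma liftxN: "(x,v) \<in> (fl N)\<^sup>* \<Longrightarrow> v \<noteq> x \<Longrightarrow> (i,v) \<in> (fl W)\<^sup>*"
  using lift[of x v] by simp

lemma trW: "tr W = (tr N - {x}) \<union> tr M" by (simp add: subst_def)
lemma plW: "pl W = (pl N - {x}) \<union> pl M" by (simp add: subst_def)

lemma pW: "petri_net W"
proof -
  have f: "finite (pl W)" "finite (tr W)" using pN pM by (auto simp: plW trW petri_net_def)
  have d: "pl W \<inter> tr W = {}" using pN pM disj by (auto simp: plW trW petri_net_def nodes_def)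
  have "(a,b) \<in> (pl W \<times> tr W) \<union> (tr W \<times> pl W)" if ab: "(a,b) \<in> fl W" for a b
  proof -
    have aM: "a \<in> nodes M \<Longrightarrow> a \<notin> nodes N" and bM: "b \<in> nodes M \<Longrightarrow> b \<notin> nodes N" using disj by auto
    from ab[unfolded fl_W] consider "(a,b) \<in> fl N" "a \<noteq> x" "b \<noteq> x" | "(a,b) \<in> fl M"
      | "(a,x) \<in> fl N" "b = i" | "a = e" "(x,b) \<in> fl N" by blast
    then show ?thesis
    proof cases
      case 1 then show ?thesis using bip[OF pN, of a b] by (auto simp: plW trW)
    next
      case 2 then show ?thesis using bip[OF pM, of a b] by (auto simp: plW trW)
    next
      case 3 then show ?thesis using bip[OF pN 3(1)] kind petri_fl[OF pN 3(1)] by (auto simp: plW trW)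
    next
      case 4 then show ?thesis using bip[OF pN 4(2)] kind petri_fl[OF pN 4(2)] by (auto simp: plW trW)
    qed
  qed
  then show ?thesis using f d by (auto simp: petri_net_def)
qed

lemma Inv_W: "Inv W"
proof -
  obtain iN eN where NIO: "inp N = {iN}" "outp N = {eN}" "iN \<in> nodes N" "eN \<in> nodes N"
    "\<forall>y\<in>nodes N. (iN,y) \<in> (fl N)\<^sup>*" "(iN,eN) \<in> (fl N)\<^sup>*" using InvN unfolding Inv_def by blast
  have QN: "\<forall>y\<in>outp N \<inter> tr N. post N y = {}" and Q'N: "\<forall>y\<in>inp N \<inter> tr N. pre N y = {}"
    and RN: "\<forall>y\<in>inp N. \<forall>t\<in>pre N y. post N t = {y}"
    and PN: "\<forall>t\<in>tr N. \<forall>q\<in>post N t. \<forall>s\<in>pre N q. 2 \<le> card (post N t) \<longrightarrow> s = t \<or> (q,s) \<in> (fl N)\<^sup>*"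
    using InvN unfolding Inv_def by blast+
  have QM: "\<forall>y\<in>outp M \<inter> tr M. post M y = {}" and Q'M: "\<forall>y\<in>inp M \<inter> tr M. pre M y = {}"
    and RM: "\<forall>y\<in>inp M. \<forall>t\<in>pre M y. post M t = {y}"
    and PM: "\<forall>t\<in>tr M. \<forall>q\<in>post M t. \<forall>s\<in>pre M q. 2 \<le> card (post M t) \<longrightarrow> s = t \<or> (q,s) \<in> (fl M)\<^sup>*"
    using InvM unfolding Inv_def by blast+
  have inpW: "inp W = {if iN = x then i else iN}" by (auto simp: subst_def NIO inpM)
  have outW: "outp W = {if eN = x then e else eN}" by (auto simp: subst_def NIO outM)
  have nW: "nodes W = (nodes N - {x}) \<union> nodes M" by (rule nodes_W)
  have trNn: "tr N \<subseteq> nodes N" "pl N \<subseteq> nodes N" "tr M \<subseteq> nodes M" "pl M \<subseteq> nodes M"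
    by (auto simp: nodes_def)
  have plTrM: "pl M \<inter> tr M = {}" and plTrN: "pl N \<inter> tr N = {}" using pM pN by (auto simp: petri_net_def)
  have finN: "finite (nodes N)" using pN by (auto simp: petri_net_def nodes_def)
  have postN_sub: "post N t \<subseteq> nodes N" for t using petri_fl[OF pN] by (auto simp: post_def)
  have preN_nodes: "s \<in> pre N q \<Longrightarrow> s \<in> nodes N \<and> s \<noteq> q" for s q using petri_fl[OF pN] by (auto simp: pre_def)
  have preM_nodes: "s \<in> pre M q \<Longrightarrow> s \<in> nodes M \<and> q \<in> nodes M" for s q using petri_fl[OF pM] by (auto simp: pre_def)
  have postN_nodes: "q \<in> post N t \<Longrightarrow> q \<in> nodes N \<and> q \<noteq> t" for q t using petri_fl[OF pN] by (auto simp: post_def)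
  have postM_nodes: "q \<in> post M t \<Longrightarrow> q \<in> nodes M" for q t using petri_fl[OF pM] by (auto simp: post_def)
  have IO: "\<exists>i' e'. inp W = {i'} \<and> outp W = {e'} \<and> i' \<in> nodes W \<and> e' \<in> nodes W \<and>
      (\<forall>y\<in>nodes W. (i',y) \<in> (fl W)\<^sup>*) \<and> (i',e') \<in> (fl W)\<^sup>*"
  proof (intro exI conjI)
    show "inp W = {if iN = x then i else iN}" by (rule inpW)
    show "outp W = {if eN = x then e else eN}" by (rule outW)
    show "(if iN = x then i else iN) \<in> nodes W" using NIO ioM nW by auto
    show "(if eN = x then e else eN) \<in> nodes W" using NIO ioM nW by auto
    show "\<forall>y\<in>nodes W. ((if iN = x then i else iN), y) \<in> (fl W)\<^sup>*"
    proof
      fix y assume "y \<in> nodes W"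
      then consider "y \<in> nodes N" "y \<noteq> x" | "y \<in> nodes M" using nW by blast
      then show "((if iN = x then i else iN), y) \<in> (fl W)\<^sup>*"
      proof cases
        case 1 then show ?thesis using lift[of iN y] NIO(5) by auto
      next
        case 2
        have "((if iN = x then i else iN), i) \<in> (fl W)\<^sup>*" using lift[of iN x] NIO(5) xN by auto
        also have "(i,y) \<in> (fl W)\<^sup>*" using rtM_W[OF reachM[OF 2]] .
        finally show ?thesis .
      qed
    qed
    show "((if iN = x then i else iN), (if eN = x then e else eN)) \<in> (fl W)\<^sup>*"
    proof (cases "eN = x")
      case True
      have "((if iN = x then i else iN), i) \<in> (fl W)\<^sup>*" using lift[of iN x] NIO(6) True by auto
      also have "(i,e) \<in> (fl W)\<^sup>*" using rtM_W[OF io] .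
      finally show ?thesis using True by simp
    next
      case False then show ?thesis using lift[of iN eN] NIO(6) by auto
    qed
  qed
  have Q: "\<forall>y\<in>outp W \<inter> tr W. post W y = {}"
  proof
    fix y assume y: "y \<in> outp W \<inter> tr W"
    show "post W y = {}"
    proof (cases "eN = x")
      case True
      then have ye: "y = e" using y outW by auto
      then have "e \<in> tr M" using y trW ionN trNn by auto
      then have xt: "x \<in> tr N" using kind plTrM by auto
      have "post W e = post M e \<union> post N x" using post_WM[OF ioM(2)] by simp
      also have "\<dots> = {}" using QM QN \<open>e \<in> tr M\<close> xt True outM NIO by auto
      finally show ?thesis using ye by simp
    next
      case False
      then have y': "y = eN" "eN \<in> tr N" using y outW trW ionN NIO disj trNn by auto
      then show ?thesis using post_WN[of eN] NIO QN False by auto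
    qed
  qed
  have Q': "\<forall>y\<in>inp W \<inter> tr W. pre W y = {}"
  proof
    fix y assume y: "y \<in> inp W \<inter> tr W"
    show "pre W y = {}"
    proof (cases "iN = x")
      case True
      then have yi: "y = i" using y inpW by auto
      then have "i \<in> tr M" using y trW ionN trNn by auto
      then have xt: "x \<in> tr N" using kind plTrM by auto
      have "pre W i = pre M i \<union> pre N x" using pre_WM[OF ioM(1)] by simp
      also have "\<dots> = {}" using Q'M Q'N \<open>i \<in> tr M\<close> xt True inpM NIO by auto
      finally show ?thesis using yi by simp
    next
      case False
      then have y': "y = iN" "iN \<in> tr N" using y inpW trW ionN NIO disj trNn by auto
      then show ?thesis using pre_WN[of iN] NIO Q'N False by auto
    qed
  qed
  have R: "\<forall>y\<in>inp W. \<forall>t\<in>pre W y. post W t = {y}"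
  proof (intro ballI)
    fix y t assume y: "y \<in> inp W" and t: "t \<in> pre W y"
    show "post W t = {y}"
    proof (cases "iN = x")
      case True
      then have yi: "y = i" using y inpW by auto
      have "t \<in> pre M i \<union> pre N x" using t yi pre_WM[OF ioM(1)] by simp
      then show ?thesis
      proof
        assume tM: "t \<in> pre M i"
        have tnM: "t \<in> nodes M" using preM_nodes[OF tM] by simp
        have "t \<noteq> e"
        proof
          assume "t = e"
          show False
          proof (cases "e \<in> tr M")
            case True
            then have "i \<in> tr M" using kind plTrM by auto
            then show False using Q'M inpM tM by auto
          next
            case False
            then have "e \<in> pl M" "i \<in> pl M" using kind ioM by (auto simp: nodes_def)
            then show False using tM \<open>t = e\<close> bip[OF pM, of e i] by (auto simp: pre_def)
          qed
        qed
        then show ?thesis using post_WM[OF tnM] RM inpM tM yi by auto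
      next
        assume tN: "t \<in> pre N x"
        have "t \<in> nodes N" "t \<noteq> x" using preN_nodes[OF tN] by auto
        moreover have "post N t = {x}" using RN NIO True tN by auto
        ultimately have "post W t = {i}" using post_WN[of t] by auto
        then show ?thesis using yi by simp
      qed
    next
      case False
      note iNx = False
      then have yN: "y = iN" using y inpW by auto
      have "t \<in> (\<lambda>z. if z = x then e else z) ` pre N iN" using t yN pre_WN[of iN] NIO False by auto
      then obtain s where s: "s \<in> pre N iN" "t = (if s = x then e else s)" by auto
      have pNs: "post N s = {iN}" using RN NIO s by auto
      show ?thesis
      proof (cases "s = x")
        case True
        have "iN \<notin> tr N" using Q'N NIO s by auto
        then have "iN \<in> pl N" using NIO by (auto simp: nodes_def)
        then have "x \<in> tr N" using bip[OF pN, of x iN] s True by (auto simp: pre_def)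
        then have "e \<in> tr M" using kind plTrN by auto
        then have "post M e = {}" using QM outM by auto
        then show ?thesis using post_WM[OF ioM(2)] s True pNs yN by auto
      next
        case False
        then have "post W s = {iN}" using post_WN[of s] preN_nodes[OF s(1)] pNs iNx by auto
        then show ?thesis using s yN False by auto
      qed
    qed
  qed
  have P: "\<forall>t\<in>tr W. \<forall>q\<in>post W t. \<forall>s\<in>pre W q. 2 \<le> card (post W t) \<longrightarrow> s = t \<or> (q,s) \<in> (fl W)\<^sup>*"
  proof (intro ballI impI)
    fix t q s assume t: "t \<in> tr W" and q: "q \<in> post W t" and s: "s \<in> pre W q" and c: "2 \<le> card (post W t)"
    from t consider "t \<in> tr N" "t \<noteq> x" | "t \<in> tr M" using trW by blast
    then show "s = t \<or> (q,s) \<in> (fl W)\<^sup>*"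
    proof cases
      case 1
      have tn: "t \<in> nodes N" using 1 trNn by auto
      have pw: "post W t = (\<lambda>z. if z = x then i else z) ` post N t" using post_WN[OF tn 1(2)] .
      have fin: "finite (post N t)" using finN postN_sub finite_subset by blast
      have c2: "2 \<le> card (post N t)" using c pw card_image_le[OF fin] by (metis le_trans)
      obtain q' where q': "q' \<in> post N t" "q = (if q' = x then i else q')" using q pw by auto
      show ?thesis
      proof (cases "q' = x")
        case False
        then have qq: "q = q'" "q \<in> nodes N" "q \<noteq> x" using q' postN_nodes by auto
        then have "s \<in> (\<lambda>z. if z = x then e else z) ` pre N q" using s pre_WN by auto
        then obtain s' where s': "s' \<in> pre N q" "s = (if s' = x then e else s')" by auto
        have h: "s' = t \<or> (q,s') \<in> (fl N)\<^sup>*" using PN 1 q' qq s' c2 by auto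
        show ?thesis
        proof (cases "s' = x")
          case True
          then show ?thesis using h 1 liftNx[of q] qq s' by auto
        next
          case False
          then show ?thesis using h liftN[of q s'] qq s' by auto
        qed
      next
        case True
        then have qi: "q = i" using q' by simp
        then have "s \<in> pre M i \<union> pre N x" using s pre_WM[OF ioM(1)] by simp
        then show ?thesis
        proof
          assume "s \<in> pre M i"
          then have "s \<in> nodes M" using preM_nodes by auto
          then show ?thesis using rtM_W[OF reachM] qi by auto
        next
          assume sN: "s \<in> pre N x"
          have "s = t \<or> (x,s) \<in> (fl N)\<^sup>*" using PN 1 q' True sN c2 by auto
          then show ?thesis using liftxN[of s] preN_nodes[OF sN] qi by auto
        qed
      qed
    next
      case 2
      have tnM: "t \<in> nodes M" using 2 trNn by auto
      show ?thesis
      proof (cases "t = e")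
        case True
        then have xt: "x \<in> tr N" using 2 kind plTrM by auto
        have "post M e = {}" using QM outM 2 True by auto
        then have pwe: "post W t = post N x" using post_WM[OF tnM] True by simp
        then have qN: "q \<in> post N x" using q by simp
        then have qq: "q \<in> nodes N" "q \<noteq> x" using postN_nodes by auto
        then have "s \<in> (\<lambda>z. if z = x then e else z) ` pre N q" using s pre_WN by auto
        then obtain s' where s': "s' \<in> pre N q" "s = (if s' = x then e else s')" by auto
        show ?thesis
        proof (cases "s' = x")
          case True then show ?thesis using s' \<open>t = e\<close> by simp
        next
          case False
          have "s' = x \<or> (q,s') \<in> (fl N)\<^sup>*" using PN xt qN s' c pwe by auto
          then show ?thesis using False liftN[of q s'] qq s' by auto
        qed
      next
        case False
        then have pw: "post W t = post M t" using post_WM[OF tnM] by simp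
        then have qM: "q \<in> post M t" using q by simp
        then have "s \<in> pre M q \<union> (if q = i then pre N x else {})" using s pre_WM[OF postM_nodes[OF qM]] by simp
        then show ?thesis
        proof
          assume "s \<in> pre M q"
          then have "s = t \<or> (q,s) \<in> (fl M)\<^sup>*" using PM 2 qM c pw by auto
          then show ?thesis using rtM_W by auto
        next
          assume "s \<in> (if q = i then pre N x else {})"
          then have "q = i" by (auto split: if_splits)
          then have "t \<in> pre M i" using qM by (simp add: pre_def post_def)
          then have "post M t = {i}" using RM inpM by auto
          then show ?thesis using c pw by simp
        qed
      qed
    qed
  qed
  show ?thesis unfolding Inv_def using pW IO Q Q' R P by blast
qed

end

lemma card1_mem: "card A = 1 \<Longrightarrow> a \<in> A \<Longrightarrow> A = {a}"
  by (metis card_1_singletonE singletonD)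

lemma base_tAND: assumes "N \<in> tAND11" shows "Inv N"
proof -
  have A: "AND_net N" "tWF N" "card (inp N) = 1" "card (outp N) = 1" using assms by (auto simp: tAND11_def)
  have pN: "petri_net N" and io: "inp N \<subseteq> tr N" "outp N \<subseteq> tr N" and wc: "wf_conn N"
    using A(2) by (auto simp: tWF_def)
  have ac: "acyclic (fl N)" using A(1) by (simp add: AND_net_def)
  obtain i where i: "inp N = {i}" using A(3) card_1_singletonE by blast
  obtain e where e: "outp N = {e}" using A(4) card_1_singletonE by blast
  have inN: "i \<in> nodes N" "e \<in> nodes N" using i e io by (auto simp: nodes_def)
  have reach: "\<forall>y\<in>nodes N. (i,y) \<in> (fl N)\<^sup>*" using wc i by (auto simp: wf_conn_def)
  have reachE: "\<forall>y\<in>nodes N. (y,e) \<in> (fl N)\<^sup>*" using wc e by (auto simp: wf_conn_def)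
  have Q: "\<forall>y\<in>outp N \<inter> tr N. post N y = {}"
  proof (intro ballI equals0I)
    fix y r assume y: "y \<in> outp N \<inter> tr N" and r: "r \<in> post N y"
    have yr: "(y,r) \<in> fl N" using r by (simp add: post_def)
    have "(r,y) \<in> (fl N)\<^sup>*" using reachE petri_fl[OF pN yr] y e by auto
    then have "(y,y) \<in> (fl N)\<^sup>+" using yr by (meson rtrancl_into_trancl2)
    then show False using ac by (simp add: acyclic_def)
  qed
  have Q': "\<forall>y\<in>inp N \<inter> tr N. pre N y = {}"
  proof (intro ballI equals0I)
    fix y r assume y: "y \<in> inp N \<inter> tr N" and r: "r \<in> pre N y"
    have yr: "(r,y) \<in> fl N" using r by (simp add: pre_def)
    have "(y,r) \<in> (fl N)\<^sup>*" using reach petri_fl[OF pN yr] y i by auto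
    then have "(y,y) \<in> (fl N)\<^sup>+" using yr by (meson rtrancl_into_trancl1)
    then show False using ac by (simp add: acyclic_def)
  qed
  have R: "\<forall>y\<in>inp N. \<forall>t\<in>pre N y. post N t = {y}" using Q' io by auto
  have P: "\<forall>t\<in>tr N. \<forall>q\<in>post N t. \<forall>s\<in>pre N q. 2 \<le> card (post N t) \<longrightarrow> s = t \<or> (q,s) \<in> (fl N)\<^sup>*"
  proof (intro ballI impI)
    fix t q s assume t: "t \<in> tr N" and q: "q \<in> post N t" and s: "s \<in> pre N q"
    have tq: "(t,q) \<in> fl N" using q by (simp add: post_def)
    have qp: "q \<in> pl N" using bip[OF pN tq] t by auto
    have "q \<notin> inp N" using qp io pN by (auto simp: petri_net_def)
    then have "card (pre N q) = 1" using A(1) qp by (auto simp: AND_net_def)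
    moreover have "t \<in> pre N q" using tq by (simp add: pre_def)
    ultimately have "pre N q = {t}" by (rule card1_mem)
    then show "s = t \<or> (q,s) \<in> (fl N)\<^sup>*" using s by auto
  qed
  show ?thesis unfolding Inv_def using pN i e inN reach Q Q' R P reach by blast
qed

lemma base_pOR: assumes "N \<in> pOR11" shows "Inv N"
proof -
  have A: "OR_net N" "pWF N" "card (inp N) = 1" "card (outp N) = 1" using assms by (auto simp: pOR11_def)
  have pN: "petri_net N" and io: "inp N \<subseteq> pl N" "outp N \<subseteq> pl N" and wc: "wf_conn N"
    using A(2) by (auto simp: pWF_def)
  have dj: "pl N \<inter> tr N = {}" using pN by (simp add: petri_net_def)
  obtain i where i: "inp N = {i}" using A(3) card_1_singletonE by blast
  obtain e where e: "outp N = {e}" using A(4) card_1_singletonE by blast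
  have inN: "i \<in> nodes N" "e \<in> nodes N" using i e io by (auto simp: nodes_def)
  have reach: "\<forall>y\<in>nodes N. (i,y) \<in> (fl N)\<^sup>*" using wc i by (auto simp: wf_conn_def)
  have reachie: "(i,e) \<in> (fl N)\<^sup>*" using reach inN by auto
  have Q: "\<forall>y\<in>outp N \<inter> tr N. post N y = {}" using io dj by auto
  have Q': "\<forall>y\<in>inp N \<inter> tr N. pre N y = {}" using io dj by auto
  have posts: "t \<in> tr N \<Longrightarrow> card (post N t) = 1" for t using A(1) io dj by (auto simp: OR_net_def)
  have R: "\<forall>y\<in>inp N. \<forall>t\<in>pre N y. post N t = {y}"
  proof (intro ballI)
    fix y t assume y: "y \<in> inp N" and t: "t \<in> pre N y"
    have ty: "(t,y) \<in> fl N" using t by (simp add: pre_def)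
    have "t \<in> tr N" using bip[OF pN ty] y io by auto
    then have "card (post N t) = 1" by (rule posts)
    moreover have "y \<in> post N t" using ty by (simp add: post_def)
    ultimately show "post N t = {y}" by (rule card1_mem)
  qed
  have P: "\<forall>t\<in>tr N. \<forall>q\<in>post N t. \<forall>s\<in>pre N q. 2 \<le> card (post N t) \<longrightarrow> s = t \<or> (q,s) \<in> (fl N)\<^sup>*"
    using posts by auto
  show ?thesis unfolding Inv_def using pN i e inN reach reachie Q Q' R P by blast
qed

lemma Scl_Inv: "N \<in> Scl (tAND11 \<union> pOR11) \<Longrightarrow> Inv N"
proof (induction rule: Scl.induct)
  case (base N) then show ?case using base_tAND base_pOR by blast
next
  case (place N M p)
  obtain i e where ie: "inp M = {i}" "outp M = {e}" using \<open>Inv M\<close> unfolding Inv_def by blast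
  have "i \<in> pl M" "e \<in> pl M" using \<open>pWF M\<close> ie by (auto simp: pWF_def)
  then interpret sub N M p i e using place ie by unfold_locales auto
  show ?case by (rule Inv_W)
next
  case (trans N M t)
  obtain i e where ie: "inp M = {i}" "outp M = {e}" using \<open>Inv M\<close> unfolding Inv_def by blast
  have "i \<in> tr M" "e \<in> tr M" using \<open>tWF M\<close> ie by (auto simp: tWF_def)
  then interpret sub N M t i e using trans ie by unfold_locales auto
  show ?case by (rule Inv_W)
qed


definition N0 :: "nat wfnet" where
  "N0 = \<lparr>pl = {0,1}, tr = {2,3}, fl = {(0,2),(0,3),(2,1),(3,1)}, inp = {0}, outp = {1}\<rparr>"

definition M0 :: "nat wfnet" where
  "M0 = \<lparr>pl = {4,5,7}, tr = {6}, fl = {(4,6),(5,6),(6,7)}, inp = {4,5}, outp = {7}\<rparr>"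

lemma acyc_lt: "R \<subseteq> {(a,b). a < (b::nat)} \<Longrightarrow> acyclic R"
proof -
  assume R: "R \<subseteq> {(a,b). a < (b::nat)}"
  have "(a,b) \<in> R\<^sup>+ \<Longrightarrow> a < b" for a b
    by (induction rule: trancl_induct) (use R in auto)
  then show ?thesis by (auto simp: acyclic_def)
qed

lemma N0_pWF: "pWF N0"
proof -
  have r: "(0::nat, y) \<in> (fl N0)\<^sup>*" if "y \<in> {0,1,2,3}" for y
  proof -
    have a: "(0::nat,2) \<in> fl N0" "(0::nat,3) \<in> fl N0" "(2::nat,1) \<in> fl N0" by (auto simp: N0_def)
    then show ?thesis using that by (auto intro: rtrancl_into_rtrancl[OF r_into_rtrancl])
  qed
  have r2: "(y, 1::nat) \<in> (fl N0)\<^sup>*" if "y \<in> {0,1,2,3}" for y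
  proof -
    have a: "(0::nat,2) \<in> fl N0" "(3::nat,1) \<in> fl N0" "(2::nat,1) \<in> fl N0" by (auto simp: N0_def)
    then show ?thesis using that by (auto intro: converse_rtrancl_into_rtrancl[OF _ r_into_rtrancl])
  qed
  show ?thesis unfolding pWF_def petri_net_def wf_conn_def nodes_def
    using r r2 by (auto simp: N0_def)
qed

lemma M0_pWF: "pWF M0"
proof -
  have a: "(4::nat,6) \<in> fl M0" "(5::nat,6) \<in> fl M0" "(6::nat,7) \<in> fl M0" by (auto simp: M0_def)
  have r: "\<exists>i\<in>inp M0. (i, y) \<in> (fl M0)\<^sup>*" if "y \<in> {4,5,6,7}" for y
  proof -
    have "(4::nat,4) \<in> (fl M0)\<^sup>*" "(5::nat,5) \<in> (fl M0)\<^sup>*" "(4::nat,6) \<in> (fl M0)\<^sup>*" "(4::nat,7) \<in> (fl M0)\<^sup>*"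
      using a by (auto intro: rtrancl_into_rtrancl[OF r_into_rtrancl])
    then show ?thesis using that by (auto simp: M0_def)
  qed
  have r2: "\<exists>q\<in>outp M0. (y, q) \<in> (fl M0)\<^sup>*" if "y \<in> {4,5,6,7}" for y
  proof -
    have "(7::nat,7) \<in> (fl M0)\<^sup>*" "(5::nat,7) \<in> (fl M0)\<^sup>*" "(6::nat,7) \<in> (fl M0)\<^sup>*" "(4::nat,7) \<in> (fl M0)\<^sup>*"
      using a by (auto intro: rtrancl_into_rtrancl[OF r_into_rtrancl])
    then show ?thesis using that by (auto simp: M0_def)
  qed
  have nd: "nodes M0 = {4,5,6,7}" by (auto simp: nodes_def M0_def)
  show ?thesis unfolding pWF_def wf_conn_def nd using r r2 by (auto simp: M0_def petri_net_def)
qed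

lemma N0_pOR: "N0 \<in> pOR11"
proof -
  have "pre N0 2 = {0}" "pre N0 3 = {0}" "post N0 2 = {1}" "post N0 3 = {1}"
    by (auto simp: pre_def post_def N0_def)
  then have "OR_net N0" unfolding OR_net_def WF_def using N0_pWF by (auto simp: N0_def)
  then show ?thesis using N0_pWF by (auto simp: pOR11_def N0_def)
qed

lemma M0_pAND: "M0 \<in> pAND"
proof -
  have "pre M0 4 = {}" "pre M0 5 = {}" "pre M0 7 = {6}" "post M0 4 = {6}" "post M0 5 = {6}" "post M0 7 = {}"
    by (auto simp: pre_def post_def M0_def)
  moreover have "acyclic (fl M0)" by (rule acyc_lt) (auto simp: M0_def)
  ultimately have "AND_net M0" unfolding AND_net_def WF_def using M0_pWF by (auto simp: M0_def)
  then show ?thesis using M0_pWF by (auto simp: pAND_def)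
qed

definition W0 :: "nat wfnet" where "W0 = subst N0 1 M0"

lemma W0_fl: "fl W0 = {(0,2),(0,3),(4,6),(5,6),(6,7),(2,4),(2,5),(3,4),(3,5)}"
  by (auto simp: W0_def subst_def pre_def post_def N0_def M0_def)

lemma W0_not_Inv: "\<not> Inv W0"
proof
  assume "Inv W0"
  then have P: "\<forall>t\<in>tr W0. \<forall>q\<in>post W0 t. \<forall>s\<in>pre W0 q. 2 \<le> card (post W0 t) \<longrightarrow> s = t \<or> (q,s) \<in> (fl W0)\<^sup>*"
    unfolding Inv_def by blast
  have "2 \<in> tr W0" by (simp add: W0_def subst_def N0_def M0_def)
  moreover have pst: "post W0 2 = {4,5}" by (auto simp: post_def W0_fl)
  moreover have "3 \<in> pre W0 4" by (simp add: pre_def W0_fl)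
  ultimately have h1: "(4::nat,3::nat) \<in> (fl W0)\<^sup>*" using P by fastforce
  have h2: "(4,y) \<in> (fl W0)\<^sup>* \<Longrightarrow> y \<in> {4::nat,6,7}" for y
    by (induction rule: rtrancl_induct) (auto simp: W0_fl)
  from h2[OF h1] show False by simp
qed

theorem mainTheorem4:
  shows "\<exists>N :: nat wfnet. N \<in> AND_OR_nets \<and> card (inp N) = 1 \<and> card (outp N) = 1 \<and>
           N \<notin> Scl (tAND11 \<union> pOR11)"
proof (intro exI conjI)
  have "N0 \<in> Scl (pAND \<union> tAND11 \<union> pOR11 \<union> tOR)" using N0_pOR by (auto intro: Scl.base)
  moreover have "M0 \<in> Scl (pAND \<union> tAND11 \<union> pOR11 \<union> tOR)" using M0_pAND by (auto intro: Scl.base)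
  moreover have "nodes N0 \<inter> nodes M0 = {}" by (auto simp: nodes_def N0_def M0_def)
  moreover have "(1::nat) \<in> pl N0" by (simp add: N0_def)
  ultimately show "W0 \<in> AND_OR_nets" unfolding AND_OR_nets_def W0_def using M0_pWF by (rule Scl.place)
  show "card (inp W0) = 1" by (simp add: W0_def subst_def N0_def M0_def)
  show "card (outp W0) = 1" by (simp add: W0_def subst_def N0_def M0_def)
  show "W0 \<notin> Scl (tAND11 \<union> pOR11)" using Scl_Inv W0_not_Inv by blast
qed

end
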